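(* Let $(X,\mathcal A)$ be a measurable space and $h,v:X\to X$ bi-measurable one-to-one maps such that $h(X)$ and $v(X)$ form a partition of $X$. Let $B\in\mathcal A$ be such that $X=\bigcup_{w\in\mathcal M(h,v)}wB$. Then: (1) if $\mu,\nu$ are two $\{h,v\}$-invariant measures on $X$ that are equal on $B$, then $\mu=\nu$ on $X$; (2) every measure that is $\mathcal M(h,v)$-invariant on $B$ is the restriction to $B$ of an $\mathcal M(h,v)$-invariant measure on $X$; (3) if $h(X\setminus B)\cap B=v(X\setminus B)\cap B=\emptyset$, then every measure that is $\{h,v\}$-invariant on $B$ is the restriction to $B$ of an $\mathcal M(h,v)$-invariant measure on $X$.
   Context: A map $g:X\to X$ is bi-measurable if it is measurable and $gA\in\mathcal A$ for all $A\in\mathcal A$. $\mathcal M(h,v)$ is the monoid generated by $h,v$ under composition, containing the identity. For a set $E$ of bi-measurable one-to-one maps and $B\in\mathcal A$, a measure $\mu$ on the measurable subsets of $B$ is $E$-invariant on $B$ if for all measurable $A\subset B$ and all $g\in E$, $gA\subset B$ implies $\mu(gA)=\mu(A)$. A measure on $X$ is $E$-invariant if it is $E$-invariant on $B=X$. *)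

theory Defs
  imports "HOL-Analysis.Analysis"
begin

definition bimeasurable :: "'a measure \<Rightarrow> ('a \<Rightarrow> 'a) \<Rightarrow> bool" where
  "bimeasurable M g \<longleftrightarrow> g \<in> M \<rightarrow>\<^sub>M M \<and> (\<forall>A\<in>sets M. g ` A \<in> sets M)"

inductive_set monoid_gen :: "('a \<Rightarrow> 'a) \<Rightarrow> ('a \<Rightarrow> 'a) \<Rightarrow> ('a \<Rightarrow> 'a) set"
  for h v where
    id_in: "id \<in> monoid_gen h v"
  | h_comp: "w \<in> monoid_gen h v \<Longrightarrow> h \<circ> w \<in> monoid_gen h v"
  | v_comp: "w \<in> monoid_gen h v \<Longrightarrow> v \<circ> w \<in> monoid_gen h v"

definition invariant_on :: "'a measure \<Rightarrow> ('a \<Rightarrow> 'a) set \<Rightarrow> 'a set \<Rightarrow> 'a measure \<Rightarrow> bool" where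
  "invariant_on M E B \<mu> \<longleftrightarrow>
     (\<forall>A\<in>sets M. \<forall>g\<in>E. A \<subseteq> B \<longrightarrow> g ` A \<subseteq> B \<longrightarrow> emeasure \<mu> (g ` A) = emeasure \<mu> A)"

end

theory Submission
  imports Defs
begin

primrec lev :: "('a \<Rightarrow> 'a) \<Rightarrow> ('a \<Rightarrow> 'a) \<Rightarrow> 'a set \<Rightarrow> nat \<Rightarrow> 'a set" where
  "lev h v B 0 = B"
| "lev h v B (Suc n) = B \<union> h ` lev h v B n \<union> v ` lev h v B n"

primrec evw :: "('a \<Rightarrow> 'a) \<Rightarrow> ('a \<Rightarrow> 'a) \<Rightarrow> bool list \<Rightarrow> ('a \<Rightarrow> 'a)" where
  "evw h v [] = id"
| "evw h v (b # l) = (if b then h else v) \<circ> evw h v l"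

lemma monoid_countable: "countable (monoid_gen h v)"
proof -
  have "monoid_gen h v \<subseteq> range (evw h v)"
  proof
    fix w assume "w \<in> monoid_gen h v"
    then show "w \<in> range (evw h v)"
    proof (induction rule: monoid_gen.induct)
      case id_in then show ?case by (metis evw.simps(1) rangeI)
    next
      case (h_comp w) then obtain l where "w = evw h v l" by auto
      then have "h \<circ> w = evw h v (True # l)" by simp
      then show ?case by blast
    next
      case (v_comp w) then obtain l where "w = evw h v l" by auto
      then have "v \<circ> w = evw h v (False # l)" by simp
      then show ?case by blast
    qed
  qed
  then show ?thesis by (rule countable_subset[OF _ countable_image[OF countableI_type]])
qed

lemma monoid_comp: "g \<in> monoid_gen h v \<Longrightarrow> w \<in> monoid_gen h v \<Longrightarrow> g \<circ> w \<in> monoid_gen h v"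
proof (induction g rule: monoid_gen.induct)
  case id_in then show ?case by simp
next
  case (h_comp g) then show ?case by (metis comp_assoc monoid_gen.h_comp)
next
  case (v_comp g) then show ?case by (metis comp_assoc monoid_gen.v_comp)
qed

lemma suminf_swap_ennreal: "(\<Sum>i. \<Sum>k. (g i k :: ennreal)) = (\<Sum>k. \<Sum>i. g i k)"
proof -
  have "(\<Sum>i. \<Sum>k. g i k) = (\<Sum>i. \<integral>\<^sup>+k. g i k \<partial>count_space UNIV)"
    by (simp add: nn_integral_count_space_nat)
  also have "\<dots> = (\<integral>\<^sup>+k. (\<Sum>i. g i k) \<partial>count_space UNIV)"
    by (rule nn_integral_suminf[symmetric]) simp
  also have "\<dots> = (\<Sum>k. \<Sum>i. g i k)" by (simp add: nn_integral_count_space_nat)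
  finally show ?thesis .
qed

lemma img_vimage: "S \<subseteq> f ` B \<Longrightarrow> f ` (f -` S \<inter> B) = S"
  by blast

locale L8 =
  fixes M :: "'a measure" and h v :: "'a \<Rightarrow> 'a" and B :: "'a set"
  assumes bh: "bimeasurable M h" and bv: "bimeasurable M v"
    and ih: "inj_on h (space M)" and iv: "inj_on v (space M)"
    and disj: "h ` space M \<inter> v ` space M = {}"
    and cover: "h ` space M \<union> v ` space M = space M"
    and B: "B \<in> sets M"
    and gen: "space M = (\<Union>w\<in>monoid_gen h v. w ` B)"
begin

lemma hm: "h \<in> M \<rightarrow>\<^sub>M M" and hs: "\<And>A. A \<in> sets M \<Longrightarrow> h ` A \<in> sets M"
  and vm: "v \<in> M \<rightarrow>\<^sub>M M" and vs: "\<And>A. A \<in> sets M \<Longrightarrow> v ` A \<in> sets M"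
  using bh bv unfolding bimeasurable_def by auto

lemma hX: "h ` space M \<subseteq> space M" and vX: "v ` space M \<subseteq> space M"
  using measurable_space[OF hm] measurable_space[OF vm] by auto

lemma BX: "B \<subseteq> space M" using B sets.sets_into_space by auto

lemma mon_props:
  assumes "w \<in> monoid_gen h v"
  shows "w \<in> M \<rightarrow>\<^sub>M M \<and> (\<forall>A\<in>sets M. w ` A \<in> sets M) \<and> inj_on w (space M)
      \<and> w ` space M \<subseteq> space M"
  using assms
proof (induction rule: monoid_gen.induct)
  case id_in then show ?case by (simp add: measurable_ident)
next
  case (h_comp w)
  have 1: "h \<circ> w \<in> M \<rightarrow>\<^sub>M M" using measurable_comp h_comp.IH hm by blast
  have 2: "\<forall>A\<in>sets M. (h \<circ> w) ` A \<in> sets M" unfolding image_comp[symmetric] using h_comp.IH hs by blast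
  have 3: "inj_on (h \<circ> w) (space M)" 
    using h_comp.IH by (intro comp_inj_on inj_on_subset[OF ih]) auto
  have 4: "(h \<circ> w) ` space M \<subseteq> space M" unfolding image_comp[symmetric] using h_comp.IH hX by blast
  show ?case using 1 2 3 4 by blast
next
  case (v_comp w)
  have 1: "v \<circ> w \<in> M \<rightarrow>\<^sub>M M" using measurable_comp v_comp.IH vm by blast
  have 2: "\<forall>A\<in>sets M. (v \<circ> w) ` A \<in> sets M" unfolding image_comp[symmetric] using v_comp.IH vs by blast
  have 3: "inj_on (v \<circ> w) (space M)" 
    using v_comp.IH by (intro comp_inj_on inj_on_subset[OF iv]) auto
  have 4: "(v \<circ> w) ` space M \<subseteq> space M" unfolding image_comp[symmetric] using v_comp.IH vX by blast
  show ?case using 1 2 3 4 by blast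
qed

lemma strip:
  assumes "w \<in> monoid_gen h v"
  shows "\<And>w' C C'. w' \<in> monoid_gen h v \<Longrightarrow> C \<subseteq> space M \<Longrightarrow> C' \<subseteq> space M \<Longrightarrow>
     w ` C = w' ` C' \<Longrightarrow> \<exists>s\<in>monoid_gen h v. s ` C = C' \<or> s ` C' = C"
  using assms
proof (induction rule: monoid_gen.induct)
  case id_in then show ?case by auto
next
  case (h_comp w w' C C')
  note IH = h_comp.IH
  have wC: "w ` C \<subseteq> space M" using mon_props[OF h_comp.hyps] h_comp.prems by blast
  have eq: "h ` (w ` C) = w' ` C'" using h_comp.prems(4) by (simp add: image_comp)
  from h_comp.prems(1) show ?case
  proof (cases rule: monoid_gen.cases)
    case id_in
    then have "(h \<circ> w) ` C = C'" using h_comp.prems(4) by simp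
    then show ?thesis using monoid_gen.h_comp[OF h_comp.hyps] by blast
  next
    case (h_comp w2)
    have w2C: "w2 ` C' \<subseteq> space M" using mon_props[OF h_comp(2)] \<open>C' \<subseteq> space M\<close> by blast
    have "h ` (w ` C) = h ` (w2 ` C')" using eq h_comp(1) by (simp add: image_comp)
    then have "w ` C = w2 ` C'" using inj_on_image_eq_iff[OF ih wC w2C] by simp
    then show ?thesis using IH h_comp(2) \<open>C \<subseteq> space M\<close> \<open>C' \<subseteq> space M\<close> by blast
  next
    case (v_comp w2)
    have w2C: "w2 ` C' \<subseteq> space M" using mon_props[OF v_comp(2)] \<open>C' \<subseteq> space M\<close> by blast
    have e2: "h ` (w ` C) = v ` (w2 ` C')" using eq v_comp(1) by (simp add: image_comp)
    have "h ` (w ` C) \<subseteq> h ` space M" "v ` (w2 ` C') \<subseteq> v ` space M" using wC w2C by auto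
    then have "h ` (w ` C) \<subseteq> h ` space M \<inter> v ` space M" using e2 by simp
    then have z: "h ` (w ` C) = {}" using disj by (simp add: Int_commute)
    then have "C = {}" by simp
    moreover have "C' = {}" using z e2 by simp
    ultimately show ?thesis using monoid_gen.id_in by auto
  qed
next
  case (v_comp w w' C C')
  note IH = v_comp.IH
  have wC: "w ` C \<subseteq> space M" using mon_props[OF v_comp.hyps] v_comp.prems by blast
  have eq: "v ` (w ` C) = w' ` C'" using v_comp.prems(4) by (simp add: image_comp)
  from v_comp.prems(1) show ?case
  proof (cases rule: monoid_gen.cases)
    case id_in
    then have "(v \<circ> w) ` C = C'" using v_comp.prems(4) by simp
    then show ?thesis using monoid_gen.v_comp[OF v_comp.hyps] by blast
  next
    case (v_comp w2)
    have w2C: "w2 ` C' \<subseteq> space M" using mon_props[OF v_comp(2)] \<open>C' \<subseteq> space M\<close> by blast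
    have "v ` (w ` C) = v ` (w2 ` C')" using eq v_comp(1) by (simp add: image_comp)
    then have "w ` C = w2 ` C'" using inj_on_image_eq_iff[OF iv wC w2C] by simp
    then show ?thesis using IH v_comp(2) \<open>C \<subseteq> space M\<close> \<open>C' \<subseteq> space M\<close> by blast
  next
    case (h_comp w2)
    have w2C: "w2 ` C' \<subseteq> space M" using mon_props[OF h_comp(2)] \<open>C' \<subseteq> space M\<close> by blast
    have e2: "v ` (w ` C) = h ` (w2 ` C')" using eq h_comp(1) by (simp add: image_comp)
    have "v ` (w ` C) \<subseteq> v ` space M" "h ` (w2 ` C') \<subseteq> h ` space M" using wC w2C by auto
    then have "v ` (w ` C) \<subseteq> v ` space M \<inter> h ` space M" using e2 by simp
    then have z: "v ` (w ` C) = {}" using disj by (simp add: Int_commute)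
    then have "C = {}" by simp
    moreover have "C' = {}" using z e2 by simp
    ultimately show ?thesis using monoid_gen.id_in by auto
  qed
qed


lemma lev_sets: "lev h v B n \<in> sets M"
proof (induction n)
  case 0 then show ?case using B by simp
next
  case (Suc n) then show ?case using B hs vs by (simp add: sets.Un)
qed

lemma lev_X: "lev h v B n \<subseteq> space M"
  using lev_sets sets.sets_into_space by blast

lemma lev_inc: "lev h v B n \<subseteq> lev h v B (Suc n)"
proof (induction n)
  case 0 then show ?case by auto
next
  case (Suc n)
  then have "h ` lev h v B n \<subseteq> h ` lev h v B (Suc n)" "v ` lev h v B n \<subseteq> v ` lev h v B (Suc n)"
    by auto
  then show ?case by (simp only: lev.simps) blast
qed

lemma mon_lev: "w \<in> monoid_gen h v \<Longrightarrow> \<exists>n. w ` B \<subseteq> lev h v B n"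
proof (induction rule: monoid_gen.induct)
  case id_in then show ?case by (intro exI[of _ 0]) simp
next
  case (h_comp w)
  then obtain n where "w ` B \<subseteq> lev h v B n" by blast
  then have "(h \<circ> w) ` B \<subseteq> lev h v B (Suc n)" by (auto simp: image_comp[symmetric])
  then show ?case by blast
next
  case (v_comp w)
  then obtain n where "w ` B \<subseteq> lev h v B n" by blast
  then have "(v \<circ> w) ` B \<subseteq> lev h v B (Suc n)" by (auto simp: image_comp[symmetric])
  then show ?case by blast
qed

lemma lev_UN: "(\<Union>n. lev h v B n) = space M"
proof
  show "(\<Union>n. lev h v B n) \<subseteq> space M" using lev_X by blast
  show "space M \<subseteq> (\<Union>n. lev h v B n)"
  proof
    fix x assume "x \<in> space M"
    then obtain w where "w \<in> monoid_gen h v" "x \<in> w ` B" using gen by blast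
    then show "x \<in> (\<Union>n. lev h v B n)" using mon_lev by blast
  qed
qed

lemma lev_incseq: "incseq (lev h v B)"
  using lev_inc by (simp add: incseq_SucI)

definition C2 where "C2 A = h -` (A \<inter> h ` space M - B) \<inter> space M"
definition C3 where "C3 A = v -` (A \<inter> v ` space M - B) \<inter> space M"

lemma C2_sets: "A \<in> sets M \<Longrightarrow> C2 A \<in> sets M"
  unfolding C2_def using hs[OF sets.top] B by (intro measurable_sets[OF hm]) auto

lemma C3_sets: "A \<in> sets M \<Longrightarrow> C3 A \<in> sets M"
  unfolding C3_def using vs[OF sets.top] B by (intro measurable_sets[OF vm]) auto

lemma C2_lev: "A \<subseteq> lev h v B (Suc n) \<Longrightarrow> C2 A \<subseteq> lev h v B n"
proof
  fix y assume A: "A \<subseteq> lev h v B (Suc n)" and y: "y \<in> C2 A"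
  then have yX: "y \<in> space M" and hy: "h y \<in> A" "h y \<notin> B" unfolding C2_def by auto
  then have "h y \<in> h ` lev h v B n \<or> h y \<in> v ` lev h v B n" using A by auto
  then show "y \<in> lev h v B n"
  proof
    assume "h y \<in> h ` lev h v B n"
    then obtain z where "z \<in> lev h v B n" "h y = h z" by auto
    then show ?thesis using inj_onD[OF ih] yX lev_X by (metis subsetD)
  next
    assume "h y \<in> v ` lev h v B n"
    then have "h y \<in> v ` space M" using lev_X by blast
    then show ?thesis using disj yX by blast
  qed
qed

lemma C3_lev: "A \<subseteq> lev h v B (Suc n) \<Longrightarrow> C3 A \<subseteq> lev h v B n"
proof
  fix y assume A: "A \<subseteq> lev h v B (Suc n)" and y: "y \<in> C3 A"
  then have yX: "y \<in> space M" and hy: "v y \<in> A" "v y \<notin> B" unfolding C3_def by auto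
  then have "v y \<in> v ` lev h v B n \<or> v y \<in> h ` lev h v B n" using A by auto
  then show "y \<in> lev h v B n"
  proof
    assume "v y \<in> v ` lev h v B n"
    then obtain z where "z \<in> lev h v B n" "v y = v z" by auto
    then show ?thesis using inj_onD[OF iv] yX lev_X by (metis subsetD)
  next
    assume "v y \<in> h ` lev h v B n"
    then have "v y \<in> h ` space M" using lev_X by blast
    then show ?thesis using disj yX by blast
  qed
qed

lemma decomp:
  assumes A: "A \<in> sets M" and s: "sets \<mu> = sets M" and inv: "invariant_on M {h, v} (space M) \<mu>"
  shows "emeasure \<mu> A = emeasure \<mu> (A \<inter> B) + emeasure \<mu> (C2 A) + emeasure \<mu> (C3 A)"
proof -
  have AX: "A \<subseteq> space M" using A sets.sets_into_space by blast
  define A2 where "A2 = A \<inter> h ` space M - B"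
  define A3 where "A3 = A \<inter> v ` space M - B"
  have A2s: "A2 \<in> sets M" unfolding A2_def using A B hs[OF sets.top] by auto
  have A3s: "A3 \<in> sets M" unfolding A3_def using A B vs[OF sets.top] by auto
  have h2: "h ` C2 A = A2" unfolding C2_def A2_def by auto
  have h3: "v ` C3 A = A3" unfolding C3_def A3_def by auto
  have e2: "emeasure \<mu> A2 = emeasure \<mu> (C2 A)"
    using inv C2_sets[OF A] hX h2 unfolding invariant_on_def C2_def
    by (metis (no_types, lifting) A2_def Diff_subset Int_lower2 insertCI order_trans)
  have e3: "emeasure \<mu> A3 = emeasure \<mu> (C3 A)"
    using inv C3_sets[OF A] vX h3 unfolding invariant_on_def C3_def
    by (metis (no_types, lifting) A3_def Diff_subset Int_lower2 insertCI order_trans)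
  have AU: "A = (A \<inter> B) \<union> A2 \<union> A3" unfolding A2_def A3_def using AX cover by blast
  have "emeasure \<mu> A = emeasure \<mu> ((A \<inter> B) \<union> A2) + emeasure \<mu> A3"
    apply (subst AU) apply (rule plus_emeasure[symmetric])
    using A B A2s A3s s disj unfolding A2_def A3_def by auto
  also have "emeasure \<mu> ((A \<inter> B) \<union> A2) = emeasure \<mu> (A \<inter> B) + emeasure \<mu> A2"
    apply (rule plus_emeasure[symmetric])
    using A B A2s s unfolding A2_def by auto
  finally show ?thesis using e2 e3 by simp
qed

lemma uniq:
  assumes s1: "sets \<mu> = sets M" and s2: "sets \<nu> = sets M"
    and i1: "invariant_on M {h, v} (space M) \<mu>" and i2: "invariant_on M {h, v} (space M) \<nu>"
    and eqB: "\<forall>A\<in>sets M. A \<subseteq> B \<longrightarrow> emeasure \<mu> A = emeasure \<nu> A"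
    and A: "A \<in> sets M"
  shows "emeasure \<mu> A = emeasure \<nu> A"
proof -
  have step: "\<forall>A\<in>sets M. A \<subseteq> lev h v B n \<longrightarrow> emeasure \<mu> A = emeasure \<nu> A" for n
  proof (induction n)
    case 0 then show ?case using eqB by simp
  next
    case (Suc n)
    show ?case
    proof (intro ballI impI)
      fix A assume A: "A \<in> sets M" and sub: "A \<subseteq> lev h v B (Suc n)"
      have "emeasure \<mu> (A \<inter> B) = emeasure \<nu> (A \<inter> B)" using eqB A B by auto
      moreover have "emeasure \<mu> (C2 A) = emeasure \<nu> (C2 A)"
        using Suc C2_sets[OF A] C2_lev[OF sub] by blast
      moreover have "emeasure \<mu> (C3 A) = emeasure \<nu> (C3 A)"
        using Suc C3_sets[OF A] C3_lev[OF sub] by blast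
      ultimately show "emeasure \<mu> A = emeasure \<nu> A"
        using decomp[OF A s1 i1] decomp[OF A s2 i2] by simp
    qed
  qed
  have AX: "A \<subseteq> space M" using A sets.sets_into_space by blast
  have AU: "A = (\<Union>n. A \<inter> lev h v B n)" using AX lev_UN by blast
  have r: "range (\<lambda>n. A \<inter> lev h v B n) \<subseteq> sets M" using A lev_sets by auto
  have inc: "incseq (\<lambda>n. A \<inter> lev h v B n)" using lev_incseq unfolding incseq_def by blast
  have "emeasure \<mu> A = (SUP n. emeasure \<mu> (A \<inter> lev h v B n))"
    using SUP_emeasure_incseq[of "\<lambda>n. A \<inter> lev h v B n" \<mu>] r inc s1 AU by simp
  also have "\<dots> = (SUP n. emeasure \<nu> (A \<inter> lev h v B n))"
  proof -
    have "emeasure \<mu> (A \<inter> lev h v B n) = emeasure \<nu> (A \<inter> lev h v B n)" for n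
      using step[of n] sets.Int[OF A lev_sets[of n]] by blast
    then show ?thesis by simp
  qed
  also have "\<dots> = emeasure \<nu> A"
    using SUP_emeasure_incseq[of "\<lambda>n. A \<inter> lev h v B n" \<nu>] r inc s2 AU by simp
  finally show ?thesis .
qed


lemma ext:
  assumes s\<mu>: "sets \<mu> = sets (restrict_space M B)" and inv: "invariant_on M (monoid_gen h v) B \<mu>"
  shows "\<exists>\<nu>. sets \<nu> = sets M \<and> invariant_on M (monoid_gen h v) (space M) \<nu>
               \<and> (\<forall>A\<in>sets M. A \<subseteq> B \<longrightarrow> emeasure \<nu> A = emeasure \<mu> A)"
proof -
  have sub: "C \<in> sets \<mu>" if "C \<in> sets M" "C \<subseteq> B" for C
  proof -
    have "C = B \<inter> C" using that by auto
    then have "C \<in> (\<inter>) B ` sets M" using that(1) by blast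
    then show ?thesis using s\<mu> by (simp add: sets_restrict_space)
  qed
  have eqC: "emeasure \<mu> C = emeasure \<mu> C'"
    if "C \<in> sets M" "C' \<in> sets M" "C \<subseteq> B" "C' \<subseteq> B" "s \<in> monoid_gen h v" "s ` C = C' \<or> s ` C' = C"
    for C C' s
    using that inv unfolding invariant_on_def by metis
  define W where "W = from_nat_into (monoid_gen h v)"
  have ne: "monoid_gen h v \<noteq> {}" using monoid_gen.id_in by blast
  have Wm: "W k \<in> monoid_gen h v" for k unfolding W_def using from_nat_into[OF ne] .
  have Wr: "range W = monoid_gen h v" unfolding W_def by (rule range_from_nat_into[OF ne monoid_countable])
  define E where "E = disjointed (\<lambda>k. W k ` B)"
  have WB: "W k ` B \<in> sets M" for k using mon_props[OF Wm] B by blast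
  have E_sets: "E k \<in> sets M" for k
    unfolding E_def using sets.range_disjointed_sets[of "\<lambda>k. W k ` B" M] WB by blast
  have E_disj: "disjoint_family E" unfolding E_def by (rule disjoint_family_disjointed)
  have E_UN: "(\<Union>k. E k) = space M"
  proof -
    have "(\<Union>k. W k ` B) = (\<Union>w\<in>range W. w ` B)" by blast
    then show ?thesis unfolding E_def UN_disjointed_eq using gen Wr by simp
  qed
  have E_sub: "E k \<subseteq> W k ` B" for k unfolding E_def by (rule disjointed_subset)
  have BX': "B \<subseteq> space M" by (rule BX)
  define f where "f k A = emeasure \<mu> (W k -` (A \<inter> E k) \<inter> B)" for k A
  define \<phi> where "\<phi> A = (\<Sum>k. f k A)" for A
  have Cm: "W k -` (A \<inter> E k) \<inter> B \<in> sets M" if "A \<in> sets M" for k A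
  proof -
    have "W k -` (A \<inter> E k) \<inter> B = (W k -` (A \<inter> E k) \<inter> space M) \<inter> B" using BX by blast
    moreover have "W k -` (A \<inter> E k) \<inter> space M \<in> sets M"
      using mon_props[OF Wm] that E_sets by (intro measurable_sets) auto
    ultimately show ?thesis using B by simp
  qed
  have pos: "positive (sets M) \<phi>" unfolding positive_def \<phi>_def f_def by simp
  have ca: "countably_additive (sets M) \<phi>"
    unfolding countably_additive_def
  proof (intro allI impI)
    fix A :: "nat \<Rightarrow> 'a set"
    assume r: "range A \<subseteq> sets M" and d: "disjoint_family A" and u: "\<Union> (range A) \<in> sets M"
    have fk: "(\<Sum>i. f k (A i)) = f k (\<Union> (range A))" for k
    proof -
      have "(\<Sum>i. f k (A i)) = emeasure \<mu> (\<Union>i. W k -` (A i \<inter> E k) \<inter> B)"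
        unfolding f_def
        apply (rule suminf_emeasure)
        using r Cm sub apply blast
        using d unfolding disjoint_family_on_def by auto
      also have "(\<Union>i. W k -` (A i \<inter> E k) \<inter> B) = W k -` (\<Union> (range A) \<inter> E k) \<inter> B" by auto
      finally show ?thesis unfolding f_def .
    qed
    have "(\<Sum>i. \<phi> (A i)) = (\<Sum>k. \<Sum>i. f k (A i))" unfolding \<phi>_def by (rule suminf_swap_ennreal)
    also have "\<dots> = \<phi> (\<Union> (range A))" unfolding \<phi>_def fk ..
    finally show "(\<Sum>i. \<phi> (A i)) = \<phi> (\<Union> (range A))" .
  qed
  define \<nu> where "\<nu> = measure_of (space M) (sets M) \<phi>"
  have s\<nu>: "sets \<nu> = sets M" unfolding \<nu>_def by (rule sets.sets_measure_of_eq)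
  have e\<nu>: "emeasure \<nu> A = \<phi> A" if "A \<in> sets M" for A
    unfolding \<nu>_def by (rule emeasure_measure_of_sigma[OF sets.sigma_algebra_axioms pos ca that])
  have key: "\<phi> (w ` C) = emeasure \<mu> C" if w: "w \<in> monoid_gen h v" and C: "C \<in> sets M" "C \<subseteq> B" for w C
  proof -
    have wp: "w \<in> M \<rightarrow>\<^sub>M M" "w ` space M \<subseteq> space M" using mon_props[OF w] by blast+
    have wCs: "w ` C \<in> sets M" using mon_props[OF w] C by blast
    have CX: "C \<subseteq> space M" using C BX by blast
    have Cks: "C \<inter> w -` E k \<in> sets M" for k
    proof -
      have "C \<inter> w -` E k = (w -` E k \<inter> space M) \<inter> C" using CX by auto
      then show ?thesis using measurable_sets[OF wp(1) E_sets] C by simp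
    qed
    have fk: "f k (w ` C) = emeasure \<mu> (C \<inter> w -` E k)" for k
    proof -
      define C' where "C' = W k -` (w ` C \<inter> E k) \<inter> B"
      define C'' where "C'' = C \<inter> w -` E k"
      have "w ` C \<inter> E k \<subseteq> W k ` B" using E_sub[of k] by auto
      then have "W k ` C' = w ` C \<inter> E k" unfolding C'_def by (rule img_vimage)
      moreover have "w ` C'' = w ` C \<inter> E k" unfolding C''_def by auto
      ultimately have eq: "W k ` C' = w ` C''" by simp
      have C's: "C' \<in> sets M" unfolding C'_def using Cm[OF wCs] .
      have C''s: "C'' \<in> sets M" unfolding C''_def by (rule Cks)
      have C'B: "C' \<subseteq> B" unfolding C'_def by auto
      have C''B: "C'' \<subseteq> B" unfolding C''_def using C by auto
      have C'X: "C' \<subseteq> space M" using C'B BX by auto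
      have C''X: "C'' \<subseteq> space M" using C''B BX by auto
      obtain s where s: "s \<in> monoid_gen h v" "s ` C' = C'' \<or> s ` C'' = C'"
        using strip[OF Wm w C'X C''X eq] by blast
      have "emeasure \<mu> C' = emeasure \<mu> C''"
        by (rule eqC[OF C's C''s C'B C''B s(1) s(2)])
      then show ?thesis unfolding f_def C'_def C''_def .
    qed
    have "\<phi> (w ` C) = (\<Sum>k. emeasure \<mu> (C \<inter> w -` E k))" unfolding \<phi>_def fk ..
    also have "\<dots> = emeasure \<mu> (\<Union>k. C \<inter> w -` E k)"
    proof (rule suminf_emeasure)
      show "range (\<lambda>k. C \<inter> w -` E k) \<subseteq> sets \<mu>"
      proof (rule image_subsetI)
        fix k
        have "C \<inter> w -` E k \<subseteq> B" using C(2) by auto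
        then show "C \<inter> w -` E k \<in> sets \<mu>" using sub[OF Cks[of k]] by simp
      qed
      show "disjoint_family (\<lambda>k. C \<inter> w -` E k)"
        unfolding disjoint_family_on_def
      proof (intro ballI impI)
        fix m n :: nat assume "m \<noteq> n"
        then have "E m \<inter> E n = {}" using E_disj unfolding disjoint_family_on_def by simp
        then show "(C \<inter> w -` E m) \<inter> (C \<inter> w -` E n) = {}" by auto
      qed
    qed
    also have "(\<Union>k. C \<inter> w -` E k) = C"
    proof -
      show ?thesis
      proof
        show "(\<Union>k. C \<inter> w -` E k) \<subseteq> C" by auto
        show "C \<subseteq> (\<Union>k. C \<inter> w -` E k)"
        proof
          fix x assume x: "x \<in> C"
          then have "w x \<in> (\<Union>k. E k)" using CX wp(2) E_UN by auto
          then obtain k where "w x \<in> E k" by auto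
          then show "x \<in> (\<Union>k. C \<inter> w -` E k)" using x by auto
        qed
      qed
    qed
    finally show ?thesis .
  qed
  show ?thesis
  proof (intro exI conjI ballI impI)
    show "sets \<nu> = sets M" by (rule s\<nu>)
    fix A assume "A \<in> sets M" "A \<subseteq> B"
    then show "emeasure \<nu> A = emeasure \<mu> A" using key[OF monoid_gen.id_in] e\<nu> by simp
  next
    show "invariant_on M (monoid_gen h v) (space M) \<nu>"
      unfolding invariant_on_def
    proof (intro ballI impI)
      fix A g assume A: "A \<in> sets M" and g: "g \<in> monoid_gen h v" and "A \<subseteq> space M" "g ` A \<subseteq> space M"
      have gp: "\<forall>A\<in>sets M. g ` A \<in> sets M" "inj_on g (space M)" using mon_props[OF g] by blast+
      define C where "C k = W k -` (A \<inter> E k) \<inter> B" for k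
      have Cs: "C k \<in> sets M" for k unfolding C_def using Cm[OF A] .
      have AE: "A \<inter> E k = W k ` C k" for k
      proof -
        have "A \<inter> E k \<subseteq> W k ` B" using E_sub[of k] by auto
        then show ?thesis unfolding C_def by (rule img_vimage[symmetric])
      qed
      have AX: "A \<subseteq> space M" using A sets.sets_into_space by blast
      have "emeasure \<nu> (g ` A) = (\<Sum>k. emeasure \<nu> (g ` (A \<inter> E k)))"
      proof -
        have "(\<Sum>k. emeasure \<nu> (g ` (A \<inter> E k))) = emeasure \<nu> (\<Union>k. g ` (A \<inter> E k))"
        proof (rule suminf_emeasure)
          show "range (\<lambda>k. g ` (A \<inter> E k)) \<subseteq> sets \<nu>"
          proof (rule image_subsetI)
            fix k
            have "A \<inter> E k \<in> sets M" using A E_sets by (rule sets.Int)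
            then have "g ` (A \<inter> E k) \<in> sets M" by (rule bspec[OF gp(1)])
            then show "g ` (A \<inter> E k) \<in> sets \<nu>" using s\<nu> by simp
          qed
          show "disjoint_family (\<lambda>k. g ` (A \<inter> E k))"
            unfolding disjoint_family_on_def
          proof (intro ballI impI)
            fix m n :: nat assume "m \<noteq> n"
            have "g ` (A \<inter> E m) \<inter> g ` (A \<inter> E n) = g ` ((A \<inter> E m) \<inter> (A \<inter> E n))"
              by (rule inj_on_image_Int[OF gp(2), symmetric]) (use AX in auto)
            also have "E m \<inter> E n = {}" using E_disj \<open>m \<noteq> n\<close> unfolding disjoint_family_on_def by simp
            then have "(A \<inter> E m) \<inter> (A \<inter> E n) = {}" by auto
            finally show "g ` (A \<inter> E m) \<inter> g ` (A \<inter> E n) = {}" by simp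
          qed
        qed
        also have "(\<Union>k. g ` (A \<inter> E k)) = g ` A"
        proof -
          have "(\<Union>k. g ` (A \<inter> E k)) = g ` (\<Union>k. A \<inter> E k)" by (simp only: image_UN)
          also have "(\<Union>k. A \<inter> E k) = A \<inter> (\<Union>k. E k)" by auto
          also have "\<dots> = A" using AX E_UN by (simp add: Int_absorb2)
          finally show ?thesis .
        qed
        finally show ?thesis by simp
      qed
      also have "\<dots> = (\<Sum>k. emeasure \<mu> (C k))"
      proof -
        have "emeasure \<nu> (g ` (A \<inter> E k)) = emeasure \<mu> (C k)" for k
        proof -
          have eq: "g ` (A \<inter> E k) = (g \<circ> W k) ` C k" unfolding AE by (simp add: image_comp)
          have "g ` (A \<inter> E k) \<in> sets M" using gp(1) A E_sets by blast
          then have "emeasure \<nu> (g ` (A \<inter> E k)) = \<phi> ((g \<circ> W k) ` C k)" using e\<nu> eq by metis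
          also have "\<dots> = emeasure \<mu> (C k)"
            by (rule key[OF monoid_comp[OF g Wm] Cs]) (auto simp: C_def)
          finally show ?thesis .
        qed
        then show ?thesis by simp
      qed
      also have "\<dots> = emeasure \<nu> A" using e\<nu>[OF A] unfolding \<phi>_def f_def C_def by simp
      finally show "emeasure \<nu> (g ` A) = emeasure \<nu> A" .
    qed
  qed
qed

lemma upgrade:
  assumes nh: "h ` (space M - B) \<inter> B = {}" and nv: "v ` (space M - B) \<inter> B = {}"
    and inv: "invariant_on M {h, v} B \<mu>"
  shows "invariant_on M (monoid_gen h v) B \<mu>"
  unfolding invariant_on_def
proof (intro ballI impI)
  fix A g assume A: "A \<in> sets M" and g: "g \<in> monoid_gen h v" and AB: "A \<subseteq> B"
  have AX: "A \<subseteq> space M" using AB BX by blast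
  from g show "g ` A \<subseteq> B \<Longrightarrow> emeasure \<mu> (g ` A) = emeasure \<mu> A"
  proof (induction rule: monoid_gen.induct)
    case id_in then show ?case by simp
  next
    case (h_comp w)
    have wA: "w ` A \<subseteq> space M" "w ` A \<in> sets M" using mon_props[OF h_comp.hyps] AX A by blast+
    have hw: "h ` (w ` A) \<subseteq> B" using h_comp.prems by (simp add: image_comp)
    have wB: "w ` A \<subseteq> B" using hw nh wA(1) by blast
    have "emeasure \<mu> (h ` (w ` A)) = emeasure \<mu> (w ` A)"
      using inv wA(2) wB hw unfolding invariant_on_def by blast
    then show ?case using h_comp.IH wB by (simp add: image_comp)
  next
    case (v_comp w)
    have wA: "w ` A \<subseteq> space M" "w ` A \<in> sets M" using mon_props[OF v_comp.hyps] AX A by blast+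
    have hw: "v ` (w ` A) \<subseteq> B" using v_comp.prems by (simp add: image_comp)
    have wB: "w ` A \<subseteq> B" using hw nv wA(1) by blast
    have "emeasure \<mu> (v ` (w ` A)) = emeasure \<mu> (w ` A)"
      using inv wA(2) wB hw unfolding invariant_on_def by blast
    then show ?case using v_comp.IH wB by (simp add: image_comp)
  qed
qed

end

theorem lemma8:
  fixes M :: "'a measure" and h v :: "'a \<Rightarrow> 'a" and B :: "'a set"
  assumes bh: "bimeasurable M h" and bv: "bimeasurable M v"
    and ih: "inj_on h (space M)" and iv: "inj_on v (space M)"
    and disj: "h ` space M \<inter> v ` space M = {}"
    and cover: "h ` space M \<union> v ` space M = space M"
    and B: "B \<in> sets M"
    and gen: "space M = (\<Union>w\<in>monoid_gen h v. w ` B)"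
  shows
    "(\<forall>\<mu> \<nu>. sets \<mu> = sets M \<longrightarrow> sets \<nu> = sets M
        \<longrightarrow> invariant_on M {h, v} (space M) \<mu> \<longrightarrow> invariant_on M {h, v} (space M) \<nu>
        \<longrightarrow> (\<forall>A\<in>sets M. A \<subseteq> B \<longrightarrow> emeasure \<mu> A = emeasure \<nu> A)
        \<longrightarrow> (\<forall>A\<in>sets M. emeasure \<mu> A = emeasure \<nu> A))
   \<and> (\<forall>\<mu>. sets \<mu> = sets (restrict_space M B) \<longrightarrow> invariant_on M (monoid_gen h v) B \<mu>
        \<longrightarrow> (\<exists>\<nu>. sets \<nu> = sets M \<and> invariant_on M (monoid_gen h v) (space M) \<nu>
               \<and> (\<forall>A\<in>sets M. A \<subseteq> B \<longrightarrow> emeasure \<nu> A = emeasure \<mu> A)))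
   \<and> (h ` (space M - B) \<inter> B = {} \<and> v ` (space M - B) \<inter> B = {} \<longrightarrow>
      (\<forall>\<mu>. sets \<mu> = sets (restrict_space M B) \<longrightarrow> invariant_on M {h, v} B \<mu>
        \<longrightarrow> (\<exists>\<nu>. sets \<nu> = sets M \<and> invariant_on M (monoid_gen h v) (space M) \<nu>
               \<and> (\<forall>A\<in>sets M. A \<subseteq> B \<longrightarrow> emeasure \<nu> A = emeasure \<mu> A))))"
proof -
  interpret L8 M h v B using assms by unfold_locales
  show ?thesis
  proof (intro conjI allI impI)
    fix \<mu> \<nu> :: "'a measure" and A
    assume "sets \<mu> = sets M" "sets \<nu> = sets M" "invariant_on M {h, v} (space M) \<mu>"
      "invariant_on M {h, v} (space M) \<nu>" "\<forall>A\<in>sets M. A \<subseteq> B \<longrightarrow> emeasure \<mu> A = emeasure \<nu> A"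
    then show "\<forall>A\<in>sets M. emeasure \<mu> A = emeasure \<nu> A"
      using uniq[of \<mu> \<nu>] by simp
  next
    fix \<mu> :: "'a measure"
    assume "sets \<mu> = sets (restrict_space M B)" "invariant_on M (monoid_gen h v) B \<mu>"
    then show "\<exists>\<nu>. sets \<nu> = sets M \<and> invariant_on M (monoid_gen h v) (space M) \<nu>
               \<and> (\<forall>A\<in>sets M. A \<subseteq> B \<longrightarrow> emeasure \<nu> A = emeasure \<mu> A)"
      by (rule ext)
  next
    fix \<mu> :: "'a measure"
    assume c: "h ` (space M - B) \<inter> B = {} \<and> v ` (space M - B) \<inter> B = {}"
      and s: "sets \<mu> = sets (restrict_space M B)" and i: "invariant_on M {h, v} B \<mu>"
    have "invariant_on M (monoid_gen h v) B \<mu>"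
      using c i upgrade by simp
    then show "\<exists>\<nu>. sets \<nu> = sets M \<and> invariant_on M (monoid_gen h v) (space M) \<nu>
               \<and> (\<forall>A\<in>sets M. A \<subseteq> B \<longrightarrow> emeasure \<nu> A = emeasure \<mu> A)"
      by (rule ext[OF s])
  qed
qed

end
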